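(* Let $\Phi\colon\mathbb X\rightrightarrows\mathbb Y$ have closed graph, $(\bar x,\bar y)\in\operatorname{gph}\Phi$ and $u\in\mathbb S_{\mathbb X}$. If $\Phi$ is quasi-normal in direction $u$ at $(\bar x,\bar y)$ with respect to some orthonormal basis $\{e_1,\dots,e_m\}$ of $\mathbb Y$, then $\Phi$ is strongly asymptotically regular at $(\bar x,\bar y)$ in direction $u$ and metrically subregular at $(\bar x,\bar y)$ in direction $u$.
   Context: $\widehat D^*$ regular coderivative; $D^*\Phi((\bar x,\bar y);(u,v))(y^* )=\{x^*\mid(x^*,-y^* )\in\mathcal N_{\operatorname{gph}\Phi}((\bar x,\bar y);(u,v))\}$ with $\mathcal N_Q(\bar z;w)$ the directional limiting normal cone (all limits of $\eta_k\in\widehat{\mathcal N}_Q(\bar z+t_kw_k)$, $w_k\to w$, $t_k\searrow0$); $\ker\Psi=\{y^*\mid0\in\Psi(y^* )\}$, $\operatorname{Im}\Psi=\bigcup_z\Psi(z)$. Quasi-normality in direction $u$ w.r.t. $\{e_i\}$: there is no nonzero $\lambda\in\ker D^*\Phi((\bar x,\bar y);(u,0))$ for which there exist $\{(x_k,y_k)\}\subset\operatorname{gph}\Phi$ with $x_k\ne\bar x$, $\{\lambda_k\}\subset\mathbb Y$, $\{\eta_k\}\subset\mathbb X$ with $x_k\to\bar x$, $y_k\to\bar y$, $\lambda_k\to\lambda$, $\eta_k\to0$, $(x_k-\bar x)/\|x_k-\bar x\|\to u$, $(y_k-\bar y)/\|x_k-\bar x\|\to0$, $\eta_k\in\widehat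 D^*\Phi(x_k,y_k)(\lambda_k)$ and $\langle\lambda,e_i\rangle\langle y_k-\bar y,e_i\rangle>0$ whenever $\langle\lambda,e_i\rangle\ne0$. Strong asymptotic regularity in direction $u$: for all $\{(x_k,y_k)\}\subset\operatorname{gph}\Phi$, $\{x_k^*\}$, $\{\lambda_k\}$, $x^*,y^*$ with $x_k\notin\Phi^{-1}(\bar y)$, $y_k\ne\bar y$, $x_k^*\in\widehat D^*\Phi(x_k,y_k)(\lambda_k)$, $x_k\to\bar x$, $y_k\to\bar y$, $x_k^*\to x^*$, $(x_k-\bar x)/\|x_k-\bar x\|\to u$, $(y_k-\bar y)/\|x_k-\bar x\|\to0$, $\|\lambda_k\|\to\infty$, $(y_k-\bar y)/\|y_k-\bar y\|-\lambda_k/\|\lambda_k\|\to0$, $(\|y_k-\bar y\|/\|x_k-\bar x\|)\lambda_k\to y^*$, we have $x^*\in\operatorname{Im}D^*\Phi((\bar x,\bar y);(u,0))$. Metric subregularity in direction $u$: there are $\varepsilon,\delta,\kappa>0$ with $\operatorname{dist}(x,\Phi^{-1}(\bar y))\le\kappa\operatorname{dist}(\bar y,\Phi(x))$ for all $x\in\bar x+\mathbb B_{\varepsilon,\delta}(u)$, where $\mathbb B_{\varepsilon,\delta}(u)=\{v\mid \|\|v\|u-\|u\|v\|\le\delta\|u\|\|v\|,\ \|v\|\le\varepsilon\}$. *)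

theory Defs
  imports "HOL-Analysis.Analysis"
begin

text \<open>Set-valued maps \<Phi> : X \<rightrightarrows> Y are modelled as functions 'a \<Rightarrow> 'b set
  between Euclidean spaces; X \<times> Y carries the product inner product.\<close>

definition gph :: "('a \<Rightarrow> 'b set) \<Rightarrow> ('a \<times> 'b) set" where
  "gph \<Phi> = {(x, y). y \<in> \<Phi> x}"

definition preimg :: "('a \<Rightarrow> 'b set) \<Rightarrow> 'b \<Rightarrow> 'a set" where
  "preimg \<Phi> y = {x. y \<in> \<Phi> x}"

definition reg_normal_cone :: "'a::real_inner set \<Rightarrow> 'a \<Rightarrow> 'a set" where
  "reg_normal_cone Q z = {\<eta>. z \<in> Q \<and>
     (\<forall>\<epsilon>>0. \<exists>\<delta>>0. \<forall>z'\<in>Q. norm (z' - z) < \<delta> \<longrightarrow> inner \<eta> (z' - z) \<le> \<epsilon> * norm (z' - z))}"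

definition dir_lim_normal_cone :: "'a::real_inner set \<Rightarrow> 'a \<Rightarrow> 'a \<Rightarrow> 'a set" where
  "dir_lim_normal_cone Q z w = {\<eta>. \<exists>t wk \<eta>k.
      (\<forall>k. t k > (0::real)) \<and> t \<longlonglongrightarrow> 0 \<and> wk \<longlonglongrightarrow> w \<and> \<eta>k \<longlonglongrightarrow> \<eta> \<and>
      (\<forall>k. \<eta>k k \<in> reg_normal_cone Q (z + t k *\<^sub>R wk k))}"

definition reg_coderiv ::
  "('a::real_inner \<Rightarrow> 'b::real_inner set) \<Rightarrow> 'a \<Rightarrow> 'b \<Rightarrow> 'b \<Rightarrow> 'a set" where
  "reg_coderiv \<Phi> x y ys = {xs. (xs, - ys) \<in> reg_normal_cone (gph \<Phi>) (x, y)}"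

definition dir_coderiv ::
  "('a::real_inner \<Rightarrow> 'b::real_inner set) \<Rightarrow> 'a \<Rightarrow> 'b \<Rightarrow> 'a \<Rightarrow> 'b \<Rightarrow> 'b \<Rightarrow> 'a set" where
  "dir_coderiv \<Phi> x y u v ys = {xs. (xs, - ys) \<in> dir_lim_normal_cone (gph \<Phi>) (x, y) (u, v)}"

definition ker_mm :: "('b \<Rightarrow> 'a::zero set) \<Rightarrow> 'b set" where
  "ker_mm \<Psi> = {ys. 0 \<in> \<Psi> ys}"

definition Im_mm :: "('b \<Rightarrow> 'a set) \<Rightarrow> 'a set" where
  "Im_mm \<Psi> = (\<Union>z. \<Psi> z)"

definition orthonormal_basis :: "'b::euclidean_space set \<Rightarrow> bool" where
  "orthonormal_basis E \<longleftrightarrow> (\<forall>e\<in>E. norm e = 1) \<and> pairwise orthogonal E \<and> span E = UNIV"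

definition quasi_normal_dir ::
  "('a::euclidean_space \<Rightarrow> 'b::euclidean_space set) \<Rightarrow> 'a \<Rightarrow> 'b \<Rightarrow> 'a \<Rightarrow> 'b set \<Rightarrow> bool" where
  "quasi_normal_dir \<Phi> xb yb u E \<longleftrightarrow>
     \<not> (\<exists>lm. lm \<noteq> 0 \<and> lm \<in> ker_mm (dir_coderiv \<Phi> xb yb u 0) \<and>
        (\<exists>x y lam \<eta>. (\<forall>k. (x k, y k) \<in> gph \<Phi> \<and> x k \<noteq> xb) \<and>
           x \<longlonglongrightarrow> xb \<and> y \<longlonglongrightarrow> yb \<and> lam \<longlonglongrightarrow> lm \<and> \<eta> \<longlonglongrightarrow> 0 \<and>
           (\<lambda>k. (1 / norm (x k - xb)) *\<^sub>R (x k - xb)) \<longlonglongrightarrow> u \<and>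
           (\<lambda>k. (1 / norm (x k - xb)) *\<^sub>R (y k - yb)) \<longlonglongrightarrow> 0 \<and>
           (\<forall>k. \<eta> k \<in> reg_coderiv \<Phi> (x k) (y k) (lam k)) \<and>
           (\<forall>k. \<forall>e\<in>E. inner lm e \<noteq> 0 \<longrightarrow> inner lm e * inner (y k - yb) e > 0)))"

definition strongly_asymp_regular_dir ::
  "('a::euclidean_space \<Rightarrow> 'b::euclidean_space set) \<Rightarrow> 'a \<Rightarrow> 'b \<Rightarrow> 'a \<Rightarrow> bool" where
  "strongly_asymp_regular_dir \<Phi> xb yb u \<longleftrightarrow>
     (\<forall>x y xs lam xst yst.
        (\<forall>k. (x k, y k) \<in> gph \<Phi> \<and> x k \<notin> preimg \<Phi> yb \<and> y k \<noteq> yb \<and>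
             xs k \<in> reg_coderiv \<Phi> (x k) (y k) (lam k)) \<and>
        x \<longlonglongrightarrow> xb \<and> y \<longlonglongrightarrow> yb \<and> xs \<longlonglongrightarrow> xst \<and>
        (\<lambda>k. (1 / norm (x k - xb)) *\<^sub>R (x k - xb)) \<longlonglongrightarrow> u \<and>
        (\<lambda>k. (1 / norm (x k - xb)) *\<^sub>R (y k - yb)) \<longlonglongrightarrow> 0 \<and>
        filterlim (\<lambda>k. norm (lam k)) at_top sequentially \<and>
        (\<lambda>k. (1 / norm (y k - yb)) *\<^sub>R (y k - yb) - (1 / norm (lam k)) *\<^sub>R lam k) \<longlonglongrightarrow> 0 \<and>
        (\<lambda>k. (norm (y k - yb) / norm (x k - xb)) *\<^sub>R lam k) \<longlonglongrightarrow> yst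
      \<longrightarrow> xst \<in> Im_mm (dir_coderiv \<Phi> xb yb u 0))"

definition dir_nbhd :: "real \<Rightarrow> real \<Rightarrow> 'a::real_normed_vector \<Rightarrow> 'a set" where
  "dir_nbhd \<epsilon> \<delta> u = {v. norm (norm v *\<^sub>R u - norm u *\<^sub>R v) \<le> \<delta> * norm u * norm v \<and> norm v \<le> \<epsilon>}"

text \<open>Directional metric subregularity. The distance to the empty set is +\<infinity>
  (so the inequality is vacuous when \<Phi> x = {}); Isabelle's infdist to {} is 0,
  hence the explicit guard.\<close>
definition metric_subregular_dir ::
  "('a::euclidean_space \<Rightarrow> 'b::euclidean_space set) \<Rightarrow> 'a \<Rightarrow> 'b \<Rightarrow> 'a \<Rightarrow> bool" where
  "metric_subregular_dir \<Phi> xb yb u \<longleftrightarrow>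
     (\<exists>\<epsilon>>0. \<exists>\<delta>>0. \<exists>\<kappa>>0. \<forall>x. x - xb \<in> dir_nbhd \<epsilon> \<delta> u \<longrightarrow> \<Phi> x \<noteq> {} \<longrightarrow>
        infdist x (preimg \<Phi> yb) \<le> \<kappa> * infdist yb (\<Phi> x))"

end

theory Submission imports Defs begin

lemma infdist_lessE:
  assumes "infdist x A < c" "A \<noteq> {}"
  obtains a where "a \<in> A" "dist x a < c"
proof -
  have "(INF a\<in>A. dist x a) < c" using assms infdist_notempty by metis
  then have "\<exists>a\<in>A. dist x a < c"
    by (subst (asm) cINF_less_iff) (use assms(2) in \<open>auto intro: bdd_belowI2[where m=0]\<close>)
  then show ?thesis using that by blast
qed

lemma reg_normal_cone_scale:
  assumes "\<eta> \<in> reg_normal_cone Q z" "c > 0"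
  shows "c *\<^sub>R \<eta> \<in> reg_normal_cone Q z"
  unfolding reg_normal_cone_def
proof (intro CollectI conjI allI impI)
  show "z \<in> Q" using assms(1) by (simp add: reg_normal_cone_def)
  fix \<epsilon> :: real assume "\<epsilon> > 0"
  then have "\<epsilon>/c > 0" using assms by simp
  then obtain \<delta> where d: "\<delta> > 0" "\<forall>z'\<in>Q. norm (z' - z) < \<delta> \<longrightarrow> inner \<eta> (z' - z) \<le> \<epsilon>/c * norm (z' - z)"
    using assms(1) unfolding reg_normal_cone_def by blast
  show "\<exists>\<delta>>0. \<forall>z'\<in>Q. norm (z' - z) < \<delta> \<longrightarrow> inner (c *\<^sub>R \<eta>) (z' - z) \<le> \<epsilon> * norm (z' - z)"
  proof (intro exI[of _ \<delta>] conjI ballI impI)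
    fix z' assume "z' \<in> Q" "norm (z' - z) < \<delta>"
    then have "inner \<eta> (z' - z) \<le> \<epsilon>/c * norm (z' - z)" using d by blast
    then have "c * inner \<eta> (z' - z) \<le> c * (\<epsilon>/c * norm (z' - z))"
      using assms(2) by (simp only: mult_left_mono less_imp_le)
    moreover have "c * (\<epsilon>/c * norm (z' - z)) = \<epsilon> * norm (z' - z)" using assms(2) by simp
    ultimately show "inner (c *\<^sub>R \<eta>) (z' - z) \<le> \<epsilon> * norm (z' - z)" by simp
  qed (use d in auto)
qed

lemma norm_upper_est:
  fixes a b :: "'b::real_inner"
  assumes "a \<noteq> 0"
  shows "norm b \<le> norm a + inner ((1/norm a) *\<^sub>R a) (b - a) + (norm (b - a))^2 / (2 * norm a)"
proof -
  define R where "R = norm a + inner ((1/norm a) *\<^sub>R a) (b - a) + (norm (b - a))^2 / (2 * norm a)"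
  have na: "norm a > 0" using assms by simp
  have e: "(norm (b - a))^2 = (norm b)^2 - 2 * inner a b + (norm a)^2"
    by (simp add: power2_norm_eq_inner inner_diff inner_commute algebra_simps)
  have ia: "inner a a = (norm a)^2" by (simp add: power2_norm_eq_inner)
  have amgm: "norm a * norm b \<le> ((norm a)^2 + (norm b)^2)/2"
    using sum_squares_ge_zero[of "norm a - norm b" 0] by (simp add: power2_eq_square algebra_simps)
  have "norm a * R = (norm a)^2 + (inner a b - inner a a) + (norm (b - a))^2 / 2"
    unfolding R_def using na by (simp add: inner_diff algebra_simps power2_eq_square)
  also have "\<dots> = ((norm a)^2 + (norm b)^2)/2" using e ia by (simp add: field_simps)
  finally have "norm a * norm b \<le> norm a * R" using amgm by linarith
  then show ?thesis using na unfolding R_def[symmetric] by (simp add: mult_le_cancel_left_pos)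
qed

lemma dir_conv_lemma:
  fixes v u :: "'a::real_normed_vector"
  assumes "norm u = 1" "v \<noteq> 0" "\<tau> > 0" "norm (v - \<tau> *\<^sub>R u) \<le> c * \<tau>"
  shows "norm ((1/norm v) *\<^sub>R v - u) \<le> 2 * c"
proof -
  have nv: "norm v > 0" using assms by simp
  have ab: "\<bar>norm v - \<tau>\<bar> \<le> norm (v - \<tau> *\<^sub>R u)"
    using norm_triangle_ineq3[of v "\<tau> *\<^sub>R u"] assms by simp
  have "(1/norm v) *\<^sub>R v - u = ((1/norm v) - 1/\<tau>) *\<^sub>R v + (1/\<tau>) *\<^sub>R (v - \<tau> *\<^sub>R u)"
    using assms(3) by (simp add: algebra_simps)
  then have "norm ((1/norm v) *\<^sub>R v - u) \<le> \<bar>1/norm v - 1/\<tau>\<bar> * norm v + (1/\<tau>) * norm (v - \<tau> *\<^sub>R u)"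
    using norm_triangle_ineq[of "((1/norm v) - 1/\<tau>) *\<^sub>R v" "(1/\<tau>) *\<^sub>R (v - \<tau> *\<^sub>R u)"] assms(3)
    by simp
  also have "\<bar>1/norm v - 1/\<tau>\<bar> * norm v = \<bar>(1/norm v - 1/\<tau>) * norm v\<bar>" using nv by (simp add: abs_mult)
  also have "(1/norm v - 1/\<tau>) * norm v = (\<tau> - norm v) / \<tau>" using nv assms(3) by (simp add: field_simps)
  also have "\<bar>(\<tau> - norm v) / \<tau>\<bar> = \<bar>norm v - \<tau>\<bar> / \<tau>" using assms(3) by simp
  also have "\<bar>norm v - \<tau>\<bar> / \<tau> + (1/\<tau>) * norm (v - \<tau> *\<^sub>R u) \<le> c + c"
  proof -
    have "\<bar>norm v - \<tau>\<bar> / \<tau> \<le> c" using ab assms(3,4) by (simp add: divide_le_eq)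
    moreover have "(1/\<tau>) * norm (v - \<tau> *\<^sub>R u) \<le> c" using assms(3,4) by (simp add: divide_le_eq)
    ultimately show ?thesis by linarith
  qed
  finally show ?thesis by simp
qed

lemma orthonormal_basis_finite:
  fixes E :: "'b::euclidean_space set"
  assumes "orthonormal_basis E" shows "finite E"
proof -
  have "0 \<notin> E" using assms unfolding orthonormal_basis_def by force
  then have "independent E" using assms pairwise_orthogonal_independent unfolding orthonormal_basis_def by blast
  then show ?thesis by (rule finiteI_independent)
qed

lemma core:
  fixes \<Phi> :: "'a::euclidean_space \<Rightarrow> 'b::euclidean_space set"
  assumes qn: "quasi_normal_dir \<Phi> xb yb u E" and fin: "finite E"
    and ev: "\<forall>\<^sub>F k in sequentially. (x k, y k) \<in> gph \<Phi> \<and> x k \<noteq> xb \<and> y k \<noteq> yb \<and> norm (lam k) = 1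
               \<and> eta k \<in> reg_coderiv \<Phi> (x k) (y k) (lam k)"
    and lx: "x \<longlonglongrightarrow> xb" and ly: "y \<longlonglongrightarrow> yb" and le: "eta \<longlonglongrightarrow> 0"
    and lu: "(\<lambda>k. (1 / norm (x k - xb)) *\<^sub>R (x k - xb)) \<longlonglongrightarrow> u"
    and l0: "(\<lambda>k. (1 / norm (x k - xb)) *\<^sub>R (y k - yb)) \<longlonglongrightarrow> 0"
    and ld: "(\<lambda>k. (1 / norm (y k - yb)) *\<^sub>R (y k - yb) - lam k) \<longlonglongrightarrow> 0"
  shows False
proof -
  define P where "P k \<longleftrightarrow> (x k, y k) \<in> gph \<Phi> \<and> x k \<noteq> xb \<and> y k \<noteq> yb \<and> norm (lam k) = 1
               \<and> eta k \<in> reg_coderiv \<Phi> (x k) (y k) (lam k)" for k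
  obtain N0 where N0: "\<And>k. k \<ge> N0 \<Longrightarrow> P k" using ev unfolding P_def eventually_sequentially by blast
  define l2 where "l2 k = lam (k + N0)" for k
  have "\<forall>k. l2 k \<in> sphere 0 1" using N0 unfolding l2_def P_def by simp
  then obtain lm r where lm: "lm \<in> sphere (0::'b) 1" and r: "strict_mono r" and lr: "(l2 \<circ> r) \<longlonglongrightarrow> lm"
    using compact_sphere[of "0::'b" 1] unfolding compact_eq_seq_compact_metric seq_compact_def by metis
  define s0 where "s0 k = r k + N0" for k
  have s0m: "strict_mono s0" using r unfolding s0_def strict_mono_def by simp
  have s0N: "s0 k \<ge> N0" for k unfolding s0_def by simp
  have lams0: "(lam \<circ> s0) \<longlonglongrightarrow> lm" using lr unfolding s0_def l2_def o_def by simp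
  define Dy where "Dy k = (1 / norm (y k - yb)) *\<^sub>R (y k - yb)" for k
  have "((\<lambda>k. (Dy k - lam k) + lam k) \<circ> s0) \<longlonglongrightarrow> 0 + lm"
    using LIMSEQ_subseq_LIMSEQ[OF ld s0m] lams0 unfolding o_def Dy_def by (intro tendsto_add) auto
  then have Dys0: "(\<lambda>k. Dy (s0 k)) \<longlonglongrightarrow> lm" by (simp add: o_def)
  have "\<forall>e\<in>E. \<forall>\<^sub>F k in sequentially. inner lm e \<noteq> 0 \<longrightarrow> inner lm e * inner (y (s0 k) - yb) e > 0"
  proof
    fix e assume "e \<in> E"
    show "\<forall>\<^sub>F k in sequentially. inner lm e \<noteq> 0 \<longrightarrow> inner lm e * inner (y (s0 k) - yb) e > 0"
    proof (cases "inner lm e = 0")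
      case True then show ?thesis by simp
    next
      case False
      have "(\<lambda>k. inner lm e * inner (Dy (s0 k)) e) \<longlonglongrightarrow> inner lm e * inner lm e"
        by (intro tendsto_intros Dys0)
      moreover have "inner lm e * inner lm e > 0" using False by (auto simp: zero_less_mult_iff linorder_neq_iff)
      ultimately have "\<forall>\<^sub>F k in sequentially. inner lm e * inner (Dy (s0 k)) e > 0"
        by (rule order_tendstoD)
      then show ?thesis
      proof (rule eventually_mono)
        fix k assume h: "inner lm e * inner (Dy (s0 k)) e > 0"
        have ny: "norm (y (s0 k) - yb) > 0" using N0[OF s0N[of k]] unfolding P_def by simp
        have "inner lm e * inner (y (s0 k) - yb) e = norm (y (s0 k) - yb) * (inner lm e * inner (Dy (s0 k)) e)"
          unfolding Dy_def using ny by (simp only: inner_scaleR_left) simp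
        then show "inner lm e \<noteq> 0 \<longrightarrow> inner lm e * inner (y (s0 k) - yb) e > 0"
          using h ny by (metis mult_pos_pos)
      qed
    qed
  qed
  then have "\<forall>\<^sub>F k in sequentially. \<forall>e\<in>E. inner lm e \<noteq> 0 \<longrightarrow> inner lm e * inner (y (s0 k) - yb) e > 0"
    by (rule eventually_ball_finite[OF fin])
  then obtain N1 where N1: "\<And>k. k \<ge> N1 \<Longrightarrow> \<forall>e\<in>E. inner lm e \<noteq> 0 \<longrightarrow> inner lm e * inner (y (s0 k) - yb) e > 0"
    unfolding eventually_sequentially by blast
  define s where "s k = s0 (k + N1)" for k
  have sm: "strict_mono s" using s0m unfolding s_def strict_mono_def by simp
  have Ps: "P (s k)" for k unfolding s_def using N0 s0N by blast
  have sgn: "\<forall>e\<in>E. inner lm e \<noteq> 0 \<longrightarrow> inner lm e * inner (y (s k) - yb) e > 0" for k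
    unfolding s_def using N1 by simp
  have lams: "(\<lambda>k. lam (s k)) \<longlonglongrightarrow> lm"
    using LIMSEQ_ignore_initial_segment[OF lams0, of N1] unfolding s_def o_def by simp
  note sub = LIMSEQ_subseq_LIMSEQ[OF _ sm, unfolded o_def]
  have lm0: "lm \<noteq> 0" using lm by auto
  define t where "t k = norm (x (s k) - xb)" for k
  have tpos: "t k > 0" for k using Ps[of k] unfolding P_def t_def by simp
  have t0: "t \<longlonglongrightarrow> 0"
  proof -
    have "(\<lambda>k. x (s k)) \<longlonglongrightarrow> xb" using sub[OF lx] .
    then have "(\<lambda>k. x (s k) - xb) \<longlonglongrightarrow> 0" using LIM_zero by blast
    then show ?thesis unfolding t_def using tendsto_norm_zero by blast
  qed
  define wk where "wk k = ((1 / t k) *\<^sub>R (x (s k) - xb), (1 / t k) *\<^sub>R (y (s k) - yb))" for k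
  have wkl: "wk \<longlonglongrightarrow> (u, 0)" unfolding wk_def t_def
    by (intro tendsto_Pair sub lu l0)
  define ek where "ek k = (eta (s k), - lam (s k))" for k
  have ekl: "ek \<longlonglongrightarrow> (0, - lm)" unfolding ek_def
    by (intro tendsto_Pair tendsto_minus sub[OF le] lams)
  have ekn: "ek k \<in> reg_normal_cone (gph \<Phi>) ((xb, yb) + t k *\<^sub>R wk k)" for k
  proof -
    have "(xb, yb) + t k *\<^sub>R wk k = (x (s k), y (s k))"
      using tpos[of k] unfolding wk_def by simp
    then show ?thesis using Ps[of k] unfolding P_def reg_coderiv_def ek_def by simp
  qed
  have ker: "lm \<in> ker_mm (dir_coderiv \<Phi> xb yb u 0)"
    unfolding ker_mm_def dir_coderiv_def dir_lim_normal_cone_def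
    using tpos t0 wkl ekl ekn by blast
  have "\<exists>lm. lm \<noteq> 0 \<and> lm \<in> ker_mm (dir_coderiv \<Phi> xb yb u 0) \<and>
        (\<exists>x y lam \<eta>. (\<forall>k. (x k, y k) \<in> gph \<Phi> \<and> x k \<noteq> xb) \<and>
           x \<longlonglongrightarrow> xb \<and> y \<longlonglongrightarrow> yb \<and> lam \<longlonglongrightarrow> lm \<and> \<eta> \<longlonglongrightarrow> 0 \<and>
           (\<lambda>k. (1 / norm (x k - xb)) *\<^sub>R (x k - xb)) \<longlonglongrightarrow> u \<and>
           (\<lambda>k. (1 / norm (x k - xb)) *\<^sub>R (y k - yb)) \<longlonglongrightarrow> 0 \<and>
           (\<forall>k. \<eta> k \<in> reg_coderiv \<Phi> (x k) (y k) (lam k)) \<and>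
           (\<forall>k. \<forall>e\<in>E. inner lm e \<noteq> 0 \<longrightarrow> inner lm e * inner (y k - yb) e > 0))"
    apply (rule exI[of _ lm], intro conjI lm0 ker)
    apply (rule exI[of _ "\<lambda>k. x (s k)"], rule exI[of _ "\<lambda>k. y (s k)"],
           rule exI[of _ "\<lambda>k. lam (s k)"], rule exI[of _ "\<lambda>k. eta (s k)"])
    using Ps sgn lams sub[OF lx] sub[OF ly] sub[OF le] sub[OF lu] sub[OF l0] unfolding P_def
    by auto
  then show False using qn unfolding quasi_normal_dir_def by blast
qed

lemma reg_normal_from_min:
  fixes \<Phi> :: "'a::euclidean_space \<Rightarrow> 'b::euclidean_space set"
  assumes g: "(xt, yt) \<in> gph \<Phi>" and a0: "yt \<noteq> yb" and al: "\<alpha> > 0" and r: "norm (xt - x0) < R"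
    and mn: "\<And>x y. (x, y) \<in> gph \<Phi> \<Longrightarrow> norm (x - x0) \<le> R \<Longrightarrow>
              norm (yt - yb) + \<alpha> * (norm (xt - x0))^2 \<le> norm (y - yb) + \<alpha> * (norm (x - x0))^2"
  shows "(- (2 * \<alpha>) *\<^sub>R (xt - x0)) \<in> reg_coderiv \<Phi> xt yt ((1 / norm (yt - yb)) *\<^sub>R (yt - yb))"
proof -
  define a where "a = yt - yb"
  define lam where "lam = (1 / norm a) *\<^sub>R a"
  define xi where "xi = - (2 * \<alpha>) *\<^sub>R (xt - x0)"
  have na: "norm a > 0" using a0 unfolding a_def by simp
  define C where "C = 1 / (2 * norm a) + \<alpha>"
  have C: "C > 0" unfolding C_def using na al by (simp add: add_pos_pos)
  have "(xi, - lam) \<in> reg_normal_cone (gph \<Phi>) (xt, yt)"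
    unfolding reg_normal_cone_def
  proof (intro CollectI conjI allI impI g)
    fix \<epsilon> :: real assume ep: "\<epsilon> > 0"
    define \<delta> where "\<delta> = min (\<epsilon> / C) (R - norm (xt - x0))"
    have dp: "\<delta> > 0" unfolding \<delta>_def using ep C r by simp
    show "\<exists>\<delta>>0. \<forall>z'\<in>gph \<Phi>. norm (z' - (xt, yt)) < \<delta> \<longrightarrow>
            inner (xi, - lam) (z' - (xt, yt)) \<le> \<epsilon> * norm (z' - (xt, yt))"
    proof (intro exI[of _ \<delta>] conjI dp ballI impI)
      fix z' assume zg: "z' \<in> gph \<Phi>" and zd: "norm (z' - (xt, yt)) < \<delta>"
      obtain x y where z': "z' = (x, y)" by (cases z')
      define n where "n = norm (z' - (xt, yt))"
      define dx where "dx = x - xt"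
      define dy where "dy = y - yt"
      have zz: "z' - (xt, yt) = (dx, dy)" unfolding z' dx_def dy_def by simp
      have ndx: "norm dx \<le> n" unfolding n_def zz by (rule norm_fst_le)
      have ndy: "norm dy \<le> n" unfolding n_def zz by (rule norm_snd_le)
      have n0: "n \<ge> 0" unfolding n_def by simp
      have "norm (x - x0) \<le> norm dx + norm (xt - x0)"
        unfolding dx_def using norm_triangle_ineq[of "x - xt" "xt - x0"] by simp
      also have "\<dots> \<le> R" using ndx zd unfolding n_def \<delta>_def by linarith
      finally have hm: "norm (yt - yb) + \<alpha> * (norm (xt - x0))^2 \<le> norm (y - yb) + \<alpha> * (norm (x - x0))^2"
        using mn zg unfolding z' by blast
      have e1: "norm (y - yb) \<le> norm a + inner lam dy + (norm dy)^2 / (2 * norm a)"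
        using norm_upper_est[of a "y - yb"] a0 unfolding a_def lam_def dy_def by simp
      have e2: "(norm (x - x0))^2 = (norm (xt - x0))^2 + 2 * inner (xt - x0) dx + (norm dx)^2"
      proof -
        have "x - x0 = (xt - x0) + dx" unfolding dx_def by simp
        then show ?thesis by (simp add: power2_norm_eq_inner inner_add inner_commute algebra_simps)
      qed
      have "0 \<le> inner lam dy + (norm dy)^2 / (2 * norm a) + \<alpha> * (2 * inner (xt - x0) dx + (norm dx)^2)"
        using hm e1 e2 unfolding a_def by (simp add: algebra_simps)
      then have i1: "inner (xi, - lam) (dx, dy) \<le> (norm dy)^2 / (2 * norm a) + \<alpha> * (norm dx)^2"
        unfolding xi_def by (simp add: inner_Pair algebra_simps)
      have "(norm dy)^2 / (2 * norm a) \<le> n^2 / (2 * norm a)"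
        using ndy na by (intro divide_right_mono power_mono) auto
      moreover have "\<alpha> * (norm dx)^2 \<le> \<alpha> * n^2"
        using ndx al by (intro mult_left_mono power_mono) auto
      ultimately have "inner (xi, - lam) (dx, dy) \<le> C * n^2"
        using i1 unfolding C_def by (simp add: algebra_simps)
      also have "C * n^2 = (C * n) * n" by (simp add: power2_eq_square)
      also have "(C * n) * n \<le> \<epsilon> * n"
      proof (rule mult_right_mono[OF _ n0])
        have "n < \<epsilon> / C" using zd unfolding n_def \<delta>_def by simp
        then show "C * n \<le> \<epsilon>" using C by (simp add: field_simps)
      qed
      finally show "inner (xi, - lam) (z' - (xt, yt)) \<le> \<epsilon> * norm (z' - (xt, yt))"
        unfolding zz using n_def zz by simp
    qed
  qed
  then show ?thesis unfolding reg_coderiv_def xi_def lam_def a_def by simp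
qed

lemma step:
  fixes \<Phi> :: "'a::euclidean_space \<Rightarrow> 'b::euclidean_space set"
  assumes cl: "closed (gph \<Phi>)" and g0: "(xb, yb) \<in> gph \<Phi>" and nu: "norm u = 1" and N: "N \<ge> 2"
    and nb: "x0 - xb \<in> dir_nbhd (1/N) (1/N) u" and ne: "\<Phi> x0 \<noteq> {}"
    and fail: "infdist x0 (preimg \<Phi> yb) > N^4 * infdist yb (\<Phi> x0)"
  shows "\<exists>x y xi. (x, y) \<in> gph \<Phi> \<and> x \<noteq> xb \<and> y \<noteq> yb \<and>
           xi \<in> reg_coderiv \<Phi> x y ((1 / norm (y - yb)) *\<^sub>R (y - yb)) \<and> norm xi \<le> 2 / N \<and>
           norm (x - xb) \<le> 2 / N \<and> norm (y - yb) \<le> (2 / N) * norm (x - xb) \<and>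
           norm ((1 / norm (x - xb)) *\<^sub>R (x - xb) - u) \<le> 4 / N"
proof -
  define S where "S = preimg \<Phi> yb"
  have xbS: "xb \<in> S" using g0 unfolding S_def preimg_def gph_def by simp
  define d where "d = infdist x0 S"
  have N0: "N > 0" using N by simp
  have N4: "N^4 > 0" using N0 by simp
  have "N^4 * infdist yb (\<Phi> x0) \<ge> 0" using N4 infdist_nonneg[of yb "\<Phi> x0"] by simp
  then have dpos: "d > 0" using fail unfolding d_def S_def by linarith
  define \<tau> where "\<tau> = norm (x0 - xb)"
  have dtau: "d \<le> \<tau>" unfolding d_def \<tau>_def using infdist_le[OF xbS, of x0] by (simp add: dist_norm)
  have tau1: "\<tau> \<le> 1/N" and tauu: "norm (\<tau> *\<^sub>R u - (x0 - xb)) \<le> \<tau> / N"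
    using nb nu unfolding dir_nbhd_def \<tau>_def by auto
  have "infdist yb (\<Phi> x0) < d / N^4" using fail N4 unfolding d_def S_def by (simp add: field_simps)
  then obtain y0 where y0: "y0 \<in> \<Phi> x0" "dist yb y0 < d / N^4" using infdist_lessE ne by blast
  define \<rho> where "\<rho> = norm (y0 - yb)"
  have rho: "\<rho> < d / N^4" using y0 unfolding \<rho>_def by (simp add: dist_norm norm_minus_commute)
  define \<alpha> where "\<alpha> = N^2 / d"
  have al: "\<alpha> > 0" unfolding \<alpha>_def using dpos N0 by simp
  define h where "h = (\<lambda>z::'a\<times>'b. norm (snd z - yb) + \<alpha> * (norm (fst z - x0))^2)"
  define K where "K = gph \<Phi> \<inter> (cball x0 (d/2) \<times> cball yb \<rho>)"
  have Kc: "compact K" unfolding K_def using cl by (intro closed_Int_compact compact_Times compact_cball)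
  have K0: "(x0, y0) \<in> K" unfolding K_def gph_def using y0 dpos by (simp add: \<rho>_def dist_norm norm_minus_commute)
  have hc: "continuous_on K h" unfolding h_def by (intro continuous_intros)
  obtain zt where zt: "zt \<in> K" "\<And>z. z \<in> K \<Longrightarrow> h zt \<le> h z"
    using continuous_attains_inf[OF Kc _ hc] K0 by blast
  obtain xt yt where zte: "zt = (xt, yt)" by (cases zt)
  have gt: "(xt, yt) \<in> gph \<Phi>" using zt(1) unfolding zte K_def by simp
  have hle: "h zt \<le> \<rho>" using zt(2)[OF K0] unfolding h_def \<rho>_def by simp
  have mn: "norm (yt - yb) + \<alpha> * (norm (xt - x0))^2 \<le> norm (y - yb) + \<alpha> * (norm (x - x0))^2"
    if "(x, y) \<in> gph \<Phi>" "norm (x - x0) \<le> d/2" for x y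
  proof (cases "norm (y - yb) \<le> \<rho>")
    case True
    then have "(x, y) \<in> K" unfolding K_def using that by (simp add: dist_norm norm_minus_commute)
    then show ?thesis using zt(2) unfolding zte h_def by fastforce
  next
    case False
    have "\<alpha> * (norm (x - x0))^2 \<ge> 0" using al by simp
    then show ?thesis using False hle unfolding zte h_def by simp
  qed
  have ax: "\<alpha> * (norm (xt - x0))^2 < d / N^4"
  proof -
    have "norm (yt - yb) \<ge> 0" by simp
    moreover have "h zt = norm (yt - yb) + \<alpha> * (norm (xt - x0))^2" unfolding zte h_def by simp
    ultimately show ?thesis using hle rho by linarith
  qed
  define q where "q = d / N^3"
  have "(norm (xt - x0))^2 < q^2"
  proof -
    have "(norm (xt - x0))^2 < (d / N^4) / \<alpha>" using ax al by (subst pos_less_divide_eq) (auto simp: mult.commute)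
    also have "(d / N^4) / \<alpha> = q^2" unfolding q_def \<alpha>_def using dpos N0 by (simp add: field_simps power2_eq_square power_numeral_reduce)
    finally show ?thesis .
  qed
  then have xq: "norm (xt - x0) < q" using power_less_imp_less_base[of _ 2 q] dpos N0 unfolding q_def by simp
  have N3: "N^3 \<ge> 8" using power_mono[OF N, of 3] by simp
  have qd: "q \<le> d / 8" unfolding q_def using dpos N3 N0 by (intro divide_left_mono) auto
  have qt: "q \<le> \<tau> / N"
  proof -
    have "N^3 \<ge> N" using N power_increasing[of 1 3 N] by simp
    then have "d / N^3 \<le> d / N" using dpos N0 by (intro divide_left_mono) auto
    also have "\<dots> \<le> \<tau> / N" using dtau N0 by (simp add: divide_right_mono)
    finally show ?thesis unfolding q_def .
  qed
  have xtS: "xt \<notin> S"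
  proof
    assume "xt \<in> S"
    then have "d \<le> dist x0 xt" unfolding d_def by (rule infdist_le)
    then show False using xq qd dpos by (simp add: dist_norm norm_minus_commute)
  qed
  have ytb: "yt \<noteq> yb" using xtS gt unfolding S_def preimg_def gph_def by auto
  have xtb: "xt \<noteq> xb" using xtS xbS by auto
  have xi: "(- (2 * \<alpha>) *\<^sub>R (xt - x0)) \<in> reg_coderiv \<Phi> xt yt ((1 / norm (yt - yb)) *\<^sub>R (yt - yb))"
  proof (rule reg_normal_from_min[OF gt ytb al])
    show "norm (xt - x0) < d / 2" using xq qd dpos by linarith
    show "\<And>x y. (x, y) \<in> gph \<Phi> \<Longrightarrow> norm (x - x0) \<le> d / 2 \<Longrightarrow>
       norm (yt - yb) + \<alpha> * (norm (xt - x0))^2 \<le> norm (y - yb) + \<alpha> * (norm (x - x0))^2"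
      by (rule mn)
  qed
  have nxi: "norm (- (2 * \<alpha>) *\<^sub>R (xt - x0)) \<le> 2 / N"
  proof -
    have "norm (- (2 * \<alpha>) *\<^sub>R (xt - x0)) = 2 * \<alpha> * norm (xt - x0)" using al by (simp add: abs_mult)
    also have "\<dots> \<le> 2 * \<alpha> * q" using xq al by simp
    also have "\<alpha> * q = 1 / N" unfolding \<alpha>_def q_def using dpos N0 by (simp add: power_numeral_reduce field_simps)
    then have "2 * \<alpha> * q = 2 / N" by (simp add: mult.assoc)
    finally show ?thesis .
  qed
  have tpos: "\<tau> > 0" using dtau dpos by simp
  have vt: "norm ((xt - xb) - \<tau> *\<^sub>R u) \<le> (2 / N) * \<tau>"
  proof -
    have eq: "(xt - xb) - \<tau> *\<^sub>R u = (xt - x0) - (\<tau> *\<^sub>R u - (x0 - xb))" by simp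
    have "norm ((xt - xb) - \<tau> *\<^sub>R u) \<le> norm (xt - x0) + norm (\<tau> *\<^sub>R u - (x0 - xb))"
      unfolding eq by (rule norm_triangle_ineq4)
    also have "\<dots> \<le> \<tau> / N + \<tau> / N" using xq qt tauu by linarith
    finally show ?thesis by simp
  qed
  have up: "norm (xt - xb) \<le> 2 / N"
  proof -
    have eq: "xt - xb = (xt - x0) + (x0 - xb)" by simp
    have "norm (xt - xb) \<le> norm (xt - x0) + norm (x0 - xb)" unfolding eq by (rule norm_triangle_ineq)
    also have "\<dots> \<le> \<tau> / N + \<tau>" using xq qt unfolding \<tau>_def by linarith
    also have "\<tau> / N \<le> \<tau>" using tpos N by (simp add: divide_le_eq)
    then have "\<tau> / N + \<tau> \<le> 2 / N" using tau1 by linarith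
    finally show ?thesis by simp
  qed
  have low: "norm (xt - xb) \<ge> \<tau> / 2"
  proof -
    have eq: "x0 - xb = (xt - xb) + (x0 - xt)" by simp
    have "\<tau> \<le> norm (xt - xb) + norm (x0 - xt)" unfolding \<tau>_def eq by (rule norm_triangle_ineq)
    moreover have "norm (x0 - xt) < \<tau> / 2"
    proof -
      have "\<tau> / N \<le> \<tau> / 2" using N tpos by (intro divide_left_mono) auto
      moreover have "norm (x0 - xt) = norm (xt - x0)" by (rule norm_minus_commute)
      ultimately show ?thesis using xq qt by linarith
    qed
    ultimately show ?thesis by linarith
  qed
  have yup: "norm (yt - yb) \<le> (2 / N) * norm (xt - xb)"
  proof -
    have "\<alpha> * (norm (xt - x0))^2 \<ge> 0" using al by simp
    then have "norm (yt - yb) \<le> \<rho>" using hle unfolding zte h_def by simp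
    also have "\<rho> \<le> \<tau> / N"
    proof -
      have "N^4 \<ge> N" using N power_increasing[of 1 4 N] by simp
      then have "d / N^4 \<le> d / N" using dpos N0 by (intro divide_left_mono) auto
      also have "\<dots> \<le> \<tau> / N" using dtau N0 by (simp add: divide_right_mono)
      finally show ?thesis using rho by simp
    qed
    also have "\<tau> / N \<le> (2 / N) * norm (xt - xb)" using low N0 by (simp add: field_simps)
    finally show ?thesis .
  qed
  have dir: "norm ((1 / norm (xt - xb)) *\<^sub>R (xt - xb) - u) \<le> 4 / N"
    using dir_conv_lemma[OF nu _ tpos vt] xtb by simp
  show ?thesis using gt xtb ytb xi nxi up yup dir by blast
qed

lemma lim_c_over: "(\<lambda>n. c / (real n + 2)) \<longlonglongrightarrow> 0"
proof -
  have "(\<lambda>n. c / real (n + 2)) \<longlonglongrightarrow> 0"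
    using LIMSEQ_ignore_initial_segment[OF lim_const_over_n[of c], of 2] by simp
  then show ?thesis by (simp add: add.commute)
qed

lemma bound_lim:
  fixes f :: "nat \<Rightarrow> 'a::real_normed_vector"
  assumes "\<And>n. norm (f n - l) \<le> g n" "g \<longlonglongrightarrow> 0"
  shows "f \<longlonglongrightarrow> l"
proof -
  have "(\<lambda>n. f n - l) \<longlonglongrightarrow> 0" by (rule Lim_null_comparison) (use assms in auto)
  then show ?thesis by (rule LIM_zero_cancel)
qed

theorem mainTheorem4:
  fixes \<Phi> :: "'a::euclidean_space \<Rightarrow> 'b::euclidean_space set"
    and xb :: 'a and yb :: 'b and u :: 'a and E :: "'b set"
  assumes "closed (gph \<Phi>)"
    and "(xb, yb) \<in> gph \<Phi>"
    and "norm u = 1"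
    and "orthonormal_basis E"
    and "quasi_normal_dir \<Phi> xb yb u E"
  shows "strongly_asymp_regular_dir \<Phi> xb yb u \<and> metric_subregular_dir \<Phi> xb yb u"
proof
  note cl = assms(1) and g0 = assms(2) and nu = assms(3) and qn = assms(5)
  have fin: "finite E" using assms(4) by (rule orthonormal_basis_finite)
  have xbP: "xb \<in> preimg \<Phi> yb" using g0 unfolding preimg_def gph_def by simp
  show "strongly_asymp_regular_dir \<Phi> xb yb u"
    unfolding strongly_asymp_regular_dir_def
  proof (intro allI impI)
    fix x y xs lam and xst :: 'a and yst :: 'b
    assume H: "(\<forall>k. (x k, y k) \<in> gph \<Phi> \<and> x k \<notin> preimg \<Phi> yb \<and> y k \<noteq> yb \<and>
             xs k \<in> reg_coderiv \<Phi> (x k) (y k) (lam k)) \<and>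
        x \<longlonglongrightarrow> xb \<and> y \<longlonglongrightarrow> yb \<and> xs \<longlonglongrightarrow> xst \<and>
        (\<lambda>k. (1 / norm (x k - xb)) *\<^sub>R (x k - xb)) \<longlonglongrightarrow> u \<and>
        (\<lambda>k. (1 / norm (x k - xb)) *\<^sub>R (y k - yb)) \<longlonglongrightarrow> 0 \<and>
        filterlim (\<lambda>k. norm (lam k)) at_top sequentially \<and>
        (\<lambda>k. (1 / norm (y k - yb)) *\<^sub>R (y k - yb) - (1 / norm (lam k)) *\<^sub>R lam k) \<longlonglongrightarrow> 0 \<and>
        (\<lambda>k. (norm (y k - yb) / norm (x k - xb)) *\<^sub>R lam k) \<longlonglongrightarrow> yst"
    have Hk: "\<And>k. (x k, y k) \<in> gph \<Phi> \<and> x k \<notin> preimg \<Phi> yb \<and> y k \<noteq> yb \<and>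
             xs k \<in> reg_coderiv \<Phi> (x k) (y k) (lam k)" using H by blast
    have Hl: "x \<longlonglongrightarrow> xb" "y \<longlonglongrightarrow> yb" "xs \<longlonglongrightarrow> xst"
        "(\<lambda>k. (1 / norm (x k - xb)) *\<^sub>R (x k - xb)) \<longlonglongrightarrow> u"
        "(\<lambda>k. (1 / norm (x k - xb)) *\<^sub>R (y k - yb)) \<longlonglongrightarrow> 0"
        "(\<lambda>k. (1 / norm (y k - yb)) *\<^sub>R (y k - yb) - (1 / norm (lam k)) *\<^sub>R lam k) \<longlonglongrightarrow> 0"
      using H by blast+
    define lam' where "lam' k = (1 / norm (lam k)) *\<^sub>R lam k" for k
    define eta' where "eta' k = (1 / norm (lam k)) *\<^sub>R xs k" for k
    have inf: "filterlim (\<lambda>k. norm (lam k)) at_top sequentially" using H by blast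
    have ev1: "\<forall>\<^sub>F k in sequentially. norm (lam k) \<ge> 1" using inf by (simp add: filterlim_at_top)
    have ev: "\<forall>\<^sub>F k in sequentially. (x k, y k) \<in> gph \<Phi> \<and> x k \<noteq> xb \<and> y k \<noteq> yb \<and> norm (lam' k) = 1
               \<and> eta' k \<in> reg_coderiv \<Phi> (x k) (y k) (lam' k)"
      using ev1
    proof (rule eventually_mono)
      fix k assume k1: "norm (lam k) \<ge> 1"
      have ln0: "lam k \<noteq> 0" using k1 by (metis norm_zero not_one_le_zero)
      have lp: "1 / norm (lam k) > 0" using ln0 by simp
      have "(xs k, - lam k) \<in> reg_normal_cone (gph \<Phi>) (x k, y k)"
        using Hk[of k] unfolding reg_coderiv_def by blast
      from reg_normal_cone_scale[OF this lp]
      have "eta' k \<in> reg_coderiv \<Phi> (x k) (y k) (lam' k)"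
        unfolding reg_coderiv_def eta'_def lam'_def by simp
      moreover have "norm (lam' k) = 1" unfolding lam'_def using ln0 by simp
      moreover have "x k \<noteq> xb" using Hk[of k] xbP by auto
      ultimately show "(x k, y k) \<in> gph \<Phi> \<and> x k \<noteq> xb \<and> y k \<noteq> yb \<and> norm (lam' k) = 1
               \<and> eta' k \<in> reg_coderiv \<Phi> (x k) (y k) (lam' k)" using Hk[of k] by blast
    qed
    have "(\<lambda>k. inverse (norm (lam k))) \<longlonglongrightarrow> 0" using inf by (rule tendsto_inverse_0_at_top)
    then have "(\<lambda>k. inverse (norm (lam k)) *\<^sub>R xs k) \<longlonglongrightarrow> 0 *\<^sub>R xst"
      using Hl(3) by (intro tendsto_scaleR) auto
    then have le: "eta' \<longlonglongrightarrow> 0" unfolding eta'_def by (simp add: divide_inverse)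
    have False
      by (rule core[OF qn fin ev _ _ le]) (use Hl in \<open>auto simp: lam'_def\<close>)
    then show "xst \<in> Im_mm (dir_coderiv \<Phi> xb yb u 0)" by blast
  qed
  show "metric_subregular_dir \<Phi> xb yb u"
  proof (rule ccontr)
    assume nm: "\<not> metric_subregular_dir \<Phi> xb yb u"
    have ex0: "\<exists>x0. x0 - xb \<in> dir_nbhd (1 / (real n + 2)) (1 / (real n + 2)) u \<and> \<Phi> x0 \<noteq> {} \<and>
             infdist x0 (preimg \<Phi> yb) > (real n + 2)^4 * infdist yb (\<Phi> x0)" for n
    proof -
      have p: "1 / (real n + 2) > 0" "(real n + 2)^4 > 0" by auto
      have "\<forall>\<epsilon>>0. \<forall>\<delta>>0. \<forall>\<kappa>>0. \<exists>x. x - xb \<in> dir_nbhd \<epsilon> \<delta> u \<and> \<Phi> x \<noteq> {} \<and>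
              \<kappa> * infdist yb (\<Phi> x) < infdist x (preimg \<Phi> yb)"
        using nm unfolding metric_subregular_dir_def by (auto simp: not_le)
      then show ?thesis using p by blast
    qed
    define P where "P n x y xi \<longleftrightarrow> (x, y) \<in> gph \<Phi> \<and> x \<noteq> xb \<and> y \<noteq> yb \<and>
           xi \<in> reg_coderiv \<Phi> x y ((1 / norm (y - yb)) *\<^sub>R (y - yb)) \<and> norm xi \<le> 2 / (real n + 2) \<and>
           norm (x - xb) \<le> 2 / (real n + 2) \<and> norm (y - yb) \<le> (2 / (real n + 2)) * norm (x - xb) \<and>
           norm ((1 / norm (x - xb)) *\<^sub>R (x - xb) - u) \<le> 4 / (real n + 2)" for n x y xi
    have h1: "\<forall>n. \<exists>x y xi. P n x y xi"
    proof
      fix n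
      obtain x0 where x0: "x0 - xb \<in> dir_nbhd (1 / (real n + 2)) (1 / (real n + 2)) u" "\<Phi> x0 \<noteq> {}"
             "infdist x0 (preimg \<Phi> yb) > (real n + 2)^4 * infdist yb (\<Phi> x0)"
        using ex0[of n] by blast
      have "real n + 2 \<ge> 2" by simp
      from step[OF cl g0 nu this x0] show "\<exists>x y xi. P n x y xi" unfolding P_def .
    qed
    obtain X where hX: "\<forall>n. \<exists>y xi. P n (X n) y xi" using choice[OF h1] by blast
    obtain Y where hY: "\<forall>n. \<exists>xi. P n (X n) (Y n) xi" using choice[OF hX] by blast
    obtain Xi where hXi: "\<forall>n. P n (X n) (Y n) (Xi n)" using choice[OF hY] by blast
    define L where "L n = (1 / norm (Y n - yb)) *\<^sub>R (Y n - yb)" for n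
    have Q': "(X n, Y n) \<in> gph \<Phi> \<and> X n \<noteq> xb \<and> Y n \<noteq> yb \<and>
           Xi n \<in> reg_coderiv \<Phi> (X n) (Y n) (L n) \<and> norm (Xi n) \<le> 2 / (real n + 2) \<and>
           norm (X n - xb) \<le> 2 / (real n + 2) \<and> norm (Y n - yb) \<le> (2 / (real n + 2)) * norm (X n - xb) \<and>
           norm ((1 / norm (X n - xb)) *\<^sub>R (X n - xb) - u) \<le> 4 / (real n + 2)" for n
      using hXi unfolding P_def L_def by blast
    have ev: "\<forall>\<^sub>F k in sequentially. (X k, Y k) \<in> gph \<Phi> \<and> X k \<noteq> xb \<and> Y k \<noteq> yb \<and> norm (L k) = 1
               \<and> Xi k \<in> reg_coderiv \<Phi> (X k) (Y k) (L k)"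
      using Q' unfolding L_def by simp
    have small: "2 / (real n + 2) \<le> 1" for n by simp
    have lx: "X \<longlonglongrightarrow> xb" by (rule bound_lim[OF _ lim_c_over[of 2]]) (use Q' in blast)
    have ybd: "norm (Y n - yb) \<le> 2 / (real n + 2)" for n
    proof -
      have "norm (Y n - yb) \<le> (2 / (real n + 2)) * norm (X n - xb)" using Q' by blast
      also have "\<dots> \<le> 1 * norm (X n - xb)" using small[of n] by (intro mult_right_mono) auto
      also have "\<dots> \<le> 2 / (real n + 2)" using Q' by simp
      finally show ?thesis .
    qed
    have ly: "Y \<longlonglongrightarrow> yb" by (rule bound_lim[OF _ lim_c_over[of 2]]) (use ybd in blast)
    have le: "Xi \<longlonglongrightarrow> 0" by (rule bound_lim[OF _ lim_c_over[of 2]]) (use Q' in simp)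
    have lu: "(\<lambda>k. (1 / norm (X k - xb)) *\<^sub>R (X k - xb)) \<longlonglongrightarrow> u"
      by (rule bound_lim[OF _ lim_c_over[of 4]]) (use Q' in blast)
    have l0: "(\<lambda>k. (1 / norm (X k - xb)) *\<^sub>R (Y k - yb)) \<longlonglongrightarrow> 0"
    proof (rule bound_lim[OF _ lim_c_over[of 2]])
      fix n
      have xp: "norm (X n - xb) > 0" using Q' by simp
      have "norm (Y n - yb) \<le> (2 / (real n + 2)) * norm (X n - xb)" using Q' by blast
      then have "norm (Y n - yb) / norm (X n - xb) \<le> 2 / (real n + 2)" using xp by (simp add: divide_le_eq)
      then show "norm ((1 / norm (X n - xb)) *\<^sub>R (Y n - yb) - 0) \<le> 2 / (real n + 2)" by simp
    qed
    have ld: "(\<lambda>k. (1 / norm (Y k - yb)) *\<^sub>R (Y k - yb) - L k) \<longlonglongrightarrow> 0" unfolding L_def by simp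
    show False by (rule core[OF qn fin ev lx ly le lu l0 ld])
  qed
qed
end
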